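(* Suppose $|X|\ge3$ and let $t$ be a full support, state independent transition function, written $t(x)\in\Delta(\mathcal{L}(X))$. Then $t$ is menu invariant if and only if $t(x)=t(y)$ for all $x,y\in X$.
   Context: $X$ is finite, $\mathcal{X}_2$ the subsets of $X$ with at least two elements, $\mathcal{L}(X)$ the linear orders on $X$, $M(\succ,A)$ the $\succ$-maximal element of $A$. A transition function $t:X\times\mathcal{L}(X)\to\Delta(\mathcal{L}(X))$ is full support if all values have full support, and state independent if $t(x,\succ)=t(x,\succ')$ for all $x,\succ,\succ'$. For $A\in\mathcal{X}_2$, $M_A$ is the Markov matrix on $\mathcal{L}(X)$ with $m_A(\succ,\succ')=t_{\succ'}(M(\succ,A),\succ)$ (probability of $\succ'$ under $t(M(\succ,A),\succ)$), with unique stationary distribution $\nu_A$. $t$ is menu invariant if $\nu_A=\nu_B$ for all $A,B\in\mathcal{X}_2$. *)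

theory Defs
  imports "HOL-Probability.Probability"
begin

text \<open>Linear orders on X (X a finite type): strict linear orders, (x,y) in r meaning x \<succ> y.\<close>
definition LO :: "'a rel set" where
  "LO = {r. strict_linear_order r}"

definition X2 :: "'a::finite set set" where
  "X2 = {A. 2 \<le> card A}"

definition maxel :: "'a rel \<Rightarrow> 'a set \<Rightarrow> 'a" where
  "maxel r A = (THE x. x \<in> A \<and> (\<forall>y\<in>A. y \<noteq> x \<longrightarrow> (x, y) \<in> r))"

definition transition_fun :: "('a \<Rightarrow> 'a rel \<Rightarrow> 'a rel pmf) \<Rightarrow> bool" where
  "transition_fun t \<longleftrightarrow> (\<forall>x. \<forall>r\<in>LO. set_pmf (t x r) \<subseteq> LO)"

definition full_support :: "('a \<Rightarrow> 'a rel \<Rightarrow> 'a rel pmf) \<Rightarrow> bool" where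
  "full_support t \<longleftrightarrow> (\<forall>x. \<forall>r\<in>LO. set_pmf (t x r) = LO)"

definition state_independent :: "('a \<Rightarrow> 'a rel \<Rightarrow> 'a rel pmf) \<Rightarrow> bool" where
  "state_independent t \<longleftrightarrow> (\<forall>x. \<forall>r\<in>LO. \<forall>r'\<in>LO. t x r = t x r')"

definition markov_entry :: "('a \<Rightarrow> 'a rel \<Rightarrow> 'a rel pmf) \<Rightarrow> 'a set \<Rightarrow> 'a rel \<Rightarrow> 'a rel \<Rightarrow> real" where
  "markov_entry t A r r' = pmf (t (maxel r A) r) r'"

definition stationary :: "('a::finite \<Rightarrow> 'a rel \<Rightarrow> 'a rel pmf) \<Rightarrow> 'a set \<Rightarrow> 'a rel pmf \<Rightarrow> bool" where
  "stationary t A \<nu> \<longleftrightarrow> set_pmf \<nu> \<subseteq> LO \<and>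
     (\<forall>r'\<in>LO. pmf \<nu> r' = (\<Sum>r\<in>LO. pmf \<nu> r * markov_entry t A r r'))"

definition stat_dist :: "('a::finite \<Rightarrow> 'a rel \<Rightarrow> 'a rel pmf) \<Rightarrow> 'a set \<Rightarrow> 'a rel pmf" where
  "stat_dist t A = (THE \<nu>. stationary t A \<nu>)"

definition menu_invariant :: "('a::finite \<Rightarrow> 'a rel \<Rightarrow> 'a rel pmf) \<Rightarrow> bool" where
  "menu_invariant t \<longleftrightarrow> (\<forall>A\<in>X2. \<forall>B\<in>X2. stat_dist t A = stat_dist t B)"

end

theory Submission
  imports Defs
begin

lemma ex_LO:
  fixes x y :: "'a::finite"
  assumes "x \<noteq> y"
  shows "\<exists>r\<in>LO. (x,y) \<in> r"
proof -
  define h where "h a = (if a = x then 0 else if a = y then 1 else to_nat a + 2)" for a :: 'a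
  have inj: "h a = h b \<Longrightarrow> a = b" for a b
    using assms unfolding h_def by (auto split: if_splits)
  define r where "r = {(a,b). h a < h b}"
  have "r \<in> LO"
    unfolding LO_def strict_linear_order_on_def trans_def irrefl_def total_on_def r_def
    using inj by (auto, metis nat_neq_iff)
  moreover have "(x,y) \<in> r" using assms unfolding r_def h_def by auto
  ultimately show ?thesis by blast
qed

lemma maxel_pair:
  assumes "r \<in> LO" "(x,y) \<in> r"
  shows "maxel r {x,y} = x"
proof -
  have tr: "trans r" and ir: "irrefl r" using assms(1) unfolding LO_def strict_linear_order_on_def by auto
  have "(y,x) \<notin> r" using tr ir assms(2) unfolding irrefl_def by (meson transE)
  moreover have "x \<noteq> y" using ir assms(2) unfolding irrefl_def by auto
  ultimately show ?thesis unfolding maxel_def using assms(2) by (rule_tac the_equality) auto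
qed

lemma maxel_pair_cases:
  assumes "r \<in> LO" "x \<noteq> y"
  shows "(maxel r {x,y} = x \<and> (x,y) \<in> r) \<or> (maxel r {x,y} = y \<and> (y,x) \<in> r)"
proof -
  have "total_on UNIV r" using assms(1) unfolding LO_def strict_linear_order_on_def by auto
  then have "(x,y) \<in> r \<or> (y,x) \<in> r" using assms(2) unfolding total_on_def by auto
  then show ?thesis using maxel_pair[OF assms(1)] by (metis insert_commute)
qed

lemma finite_LO: "finite (LO :: ('a::finite) rel set)"
  by (rule finite_subset[of _ UNIV]) auto

lemma pair_stat:
  fixes t :: "'a::finite \<Rightarrow> 'a rel \<Rightarrow> 'a rel pmf"
  assumes FS: "full_support t" and SI: "state_independent t"
    and r0: "r0 \<in> LO" and xy: "x \<noteq> y"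
  shows "\<exists>\<alpha>. 0 < \<alpha> \<and> \<alpha> < 1 \<and> (\<forall>r. pmf (stat_dist t {x,y}) r =
            \<alpha> * pmf (t x r0) r + (1 - \<alpha>) * pmf (t y r0) r)"
proof -
  define P where "P z = t z r0" for z
  have SIr: "r \<in> LO \<Longrightarrow> t z r = P z" for r z
    using SI r0 unfolding state_independent_def P_def by blast
  have setP: "set_pmf (P z) = LO" for z using FS r0 unfolding full_support_def P_def by blast
  have posP: "r \<in> LO \<Longrightarrow> pmf (P z) r > 0" for r z
    using setP by (metis pmf_positive)
  have zeroP: "r \<notin> LO \<Longrightarrow> pmf (P z) r = 0" for r z
    using setP by (metis set_pmf_iff)
  define A where "A = {x,y}"
  define Ex where "Ex = {r\<in>LO. maxel r A = x}"
  define Ey where "Ey = {r\<in>LO. maxel r A = y}"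
  have fin: "finite (LO :: 'a rel set)" by (rule finite_LO)
  have finEx: "finite Ex" "finite Ey" unfolding Ex_def Ey_def using fin by auto
  have disj: "Ex \<inter> Ey = {}" unfolding Ex_def Ey_def using xy by auto
  have un: "LO = Ex \<union> Ey" proof -
    have "r \<in> LO \<Longrightarrow> maxel r A = x \<or> maxel r A = y" for r
      unfolding A_def using maxel_pair_cases[of r x y] xy by blast
    then show ?thesis unfolding Ex_def Ey_def by auto
  qed
  obtain rx where rx: "rx \<in> LO" "(x,y) \<in> rx" using ex_LO xy by blast
  obtain ry where ry: "ry \<in> LO" "(y,x) \<in> ry" using ex_LO[of y x] xy by auto
  have rxE: "rx \<in> Ex" unfolding Ex_def A_def using rx maxel_pair[of rx x y] by simp
  have ryE: "ry \<in> Ey" unfolding Ey_def A_def using ry maxel_pair[of ry y x] by (simp add: insert_commute)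
  have sumsplit: "(\<Sum>r\<in>LO. f r) = (\<Sum>r\<in>Ex. f r) + (\<Sum>r\<in>Ey. f r)" for f :: "'a rel \<Rightarrow> real"
    unfolding un by (rule sum.union_disjoint[OF finEx disj])
  have tot1: "set_pmf \<nu> \<subseteq> LO \<Longrightarrow> (\<Sum>r\<in>Ex. pmf \<nu> r) + (\<Sum>r\<in>Ey. pmf \<nu> r) = 1" for \<nu>
    using sum_pmf_eq_1[OF fin, of \<nu>] sumsplit by simp
  have decomp: "(\<Sum>r\<in>LO. pmf \<nu> r * markov_entry t A r r') =
      (\<Sum>r\<in>Ex. pmf \<nu> r) * pmf (P x) r' + (\<Sum>r\<in>Ey. pmf \<nu> r) * pmf (P y) r'" for \<nu> r'
  proof -
    have "(\<Sum>r\<in>Ex. pmf \<nu> r * markov_entry t A r r') = (\<Sum>r\<in>Ex. pmf \<nu> r * pmf (P x) r')"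
      by (rule sum.cong) (auto simp: markov_entry_def Ex_def SIr)
    moreover have "(\<Sum>r\<in>Ey. pmf \<nu> r * markov_entry t A r r') = (\<Sum>r\<in>Ey. pmf \<nu> r * pmf (P y) r')"
      by (rule sum.cong) (auto simp: markov_entry_def Ey_def SIr)
    ultimately show ?thesis by (simp add: sumsplit sum_distrib_right)
  qed
  define s where "s = (\<Sum>r\<in>Ex. pmf (P x) r)"
  define q where "q = (\<Sum>r\<in>Ex. pmf (P y) r)"
  have q0: "q > 0" unfolding q_def
    by (rule sum_pos2[OF finEx(1) rxE]) (use posP rx(1) Ex_def in \<open>auto intro: less_imp_le\<close>)
  have "(\<Sum>r\<in>Ey. pmf (P x) r) > 0"
    by (rule sum_pos2[OF finEx(2) ryE]) (use posP ry(1) Ey_def in \<open>auto intro: less_imp_le\<close>)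
  then have s1: "s < 1" using tot1[of "P x"] setP unfolding s_def by auto
  define \<alpha> where "\<alpha> = q / (1 - s + q)"
  have den: "1 - s + q > 0" using s1 q0 by simp
  have a0: "0 < \<alpha>" "\<alpha> < 1" unfolding \<alpha>_def using den q0 s1 by (auto simp: field_simps)
  have aeq0: "\<alpha> * (1 - s + q) = q" unfolding \<alpha>_def using den by simp
  have aeq: "\<alpha> = \<alpha> * s + (1 - \<alpha>) * q" using aeq0 by (simp add: algebra_simps)
  have aun: "\<beta> = \<beta> * s + (1 - \<beta>) * q \<Longrightarrow> \<beta> = \<alpha>" for \<beta>
    proof -
    assume h: "\<beta> = \<beta> * s + (1 - \<beta>) * q"
    have "\<beta> * (1 - s + q) = q" using h by (simp add: algebra_simps)
    then show "\<beta> = \<alpha>" unfolding \<alpha>_def using den by (simp add: eq_divide_eq)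
  qed
  define \<nu>0 where "\<nu>0 = bind_pmf (bernoulli_pmf \<alpha>) (\<lambda>b. if b then P x else P y)"
  have pmf0: "pmf \<nu>0 r = \<alpha> * pmf (P x) r + (1 - \<alpha>) * pmf (P y) r" for r
    unfolding \<nu>0_def pmf_bind using a0 by simp
  have set0: "set_pmf \<nu>0 \<subseteq> LO"
    proof
    fix r assume "r \<in> set_pmf \<nu>0"
    then have "pmf \<nu>0 r \<noteq> 0" by (simp add: set_pmf_iff)
    then show "r \<in> LO" using pmf0[of r] zeroP[of r] by (cases "r \<in> LO") auto
  qed
  have sEx0: "(\<Sum>r\<in>Ex. pmf \<nu>0 r) = \<alpha>"
    unfolding pmf0 sum.distrib sum_distrib_left[symmetric] s_def[symmetric] q_def[symmetric]
    using aeq by simp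
  have sEy0: "(\<Sum>r\<in>Ey. pmf \<nu>0 r) = 1 - \<alpha>" using tot1[OF set0] sEx0 by simp
  have st0: "stationary t A \<nu>0"
    unfolding stationary_def decomp sEx0 sEy0 using set0 by (simp add: pmf0)
  have uniq: "\<nu> = \<nu>0" if st: "stationary t A \<nu>" for \<nu>
  proof -
    define \<beta> where "\<beta> = (\<Sum>r\<in>Ex. pmf \<nu> r)"
    have setn: "set_pmf \<nu> \<subseteq> LO" using st unfolding stationary_def by auto
    have sy: "(\<Sum>r\<in>Ey. pmf \<nu> r) = 1 - \<beta>" using tot1[OF setn] unfolding \<beta>_def by simp
    have eqn: "r' \<in> LO \<Longrightarrow> pmf \<nu> r' = \<beta> * pmf (P x) r' + (1 - \<beta>) * pmf (P y) r'" for r'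
      proof -
      assume "r' \<in> LO"
      then have "pmf \<nu> r' = (\<Sum>r\<in>LO. pmf \<nu> r * markov_entry t A r r')"
        using st unfolding stationary_def by blast
      then show ?thesis unfolding decomp \<beta>_def[symmetric] sy .
    qed
    have "\<beta> = (\<Sum>r\<in>Ex. pmf \<nu> r)" by (simp add: \<beta>_def)
    also have "\<dots> = (\<Sum>r\<in>Ex. \<beta> * pmf (P x) r + (1 - \<beta>) * pmf (P y) r)"
      by (rule sum.cong) (simp_all add: Ex_def eqn)
    also have "\<dots> = \<beta> * s + (1 - \<beta>) * q"
      unfolding sum.distrib sum_distrib_left[symmetric] s_def q_def ..
    finally have "\<beta> = \<alpha>" by (rule aun)
    show ?thesis
    proof (rule pmf_eqI)
      fix r
      show "pmf \<nu> r = pmf \<nu>0 r"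
      proof (cases "r \<in> LO")
        case True then show ?thesis using eqn pmf0 \<open>\<beta> = \<alpha>\<close> by simp
      next
        case False then show ?thesis proof -
          have "r \<notin> set_pmf \<nu>" "r \<notin> set_pmf \<nu>0" using False setn set0 by auto
          then show ?thesis by (simp add: set_pmf_iff)
        qed
      qed
    qed
  qed
  have "stat_dist t A = \<nu>0" unfolding stat_dist_def using st0 uniq by (rule the_equality)
  then show ?thesis using a0 pmf0 unfolding A_def P_def by metis
qed

lemma alg:
  fixes a b c u v w n :: real
  assumes a: "0 < a" "a < 1" and b: "0 < b" "b < 1" and c: "0 < c" "c < 1"
    and e1: "n = a * u + (1-a) * v" and e2: "n = b * u + (1-b) * w" and e3: "n = c * v + (1-c) * w"
  shows "u = n \<and> v = n"
proof -
  define U V W where "U = u - n" "V = v - n" "W = w - n"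
  have f1: "a * U + (1-a) * V = 0" using e1 unfolding U_V_W_def by (simp add: algebra_simps)
  have f2: "b * U + (1-b) * W = 0" using e2 unfolding U_V_W_def by (simp add: algebra_simps)
  have f3: "c * V + (1-c) * W = 0" using e3 unfolding U_V_W_def by (simp add: algebra_simps)
  have sg: "(X > 0 \<longleftrightarrow> Y < 0) \<and> (X < 0 \<longleftrightarrow> Y > 0)"
    if "0 < p" "0 < 1 - p" "p * X + (1-p) * Y = 0" for p X Y :: real
  proof -
    have "X > 0 \<Longrightarrow> p * X > 0" "X < 0 \<Longrightarrow> p * X < 0" "X = 0 \<Longrightarrow> p * X = 0"
      "Y > 0 \<Longrightarrow> (1-p) * Y > 0" "Y < 0 \<Longrightarrow> (1-p) * Y < 0" "Y = 0 \<Longrightarrow> (1-p) * Y = 0"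
      using that by (auto intro: mult_pos_pos mult_pos_neg)
    then show ?thesis using that(3) by linarith
  qed
  have s1: "(U > 0 \<longleftrightarrow> V < 0) \<and> (U < 0 \<longleftrightarrow> V > 0)" using sg a f1 by simp
  have s2: "(U > 0 \<longleftrightarrow> W < 0) \<and> (U < 0 \<longleftrightarrow> W > 0)" using sg b f2 by simp
  have s3: "(V > 0 \<longleftrightarrow> W < 0) \<and> (V < 0 \<longleftrightarrow> W > 0)" using sg c f3 by simp
  have "U = 0" using s1 s2 s3 by linarith
  then have "V = 0" using f1 a by simp
  then show ?thesis using \<open>U = 0\<close> unfolding U_V_W_def by simp
qed

theorem proposition6:
  fixes t :: "'a::finite \<Rightarrow> 'a rel \<Rightarrow> 'a rel pmf"
  assumes "CARD('a) \<ge> 3"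
    and "transition_fun t"
    and "full_support t"
    and "state_independent t"
  shows "menu_invariant t \<longleftrightarrow> (\<forall>x y. \<forall>r\<in>LO. t x r = t y r)"
proof -
  note FS = assms(3) and SI = assms(4)
  have other: "\<exists>z. z \<noteq> x \<and> z \<noteq> y" for x y :: 'a
  proof (rule ccontr)
    assume "\<not> ?thesis"
    then have "UNIV \<subseteq> {x,y}" by auto
    then have "CARD('a) \<le> card {x,y}" by (simp add: card_mono)
    also have "\<dots> \<le> 2" by (simp add: card_insert_if)
    finally show False using assms(1) by simp
  qed
  have "\<exists>x0 y0 :: 'a. x0 \<noteq> y0" using other by blast
  then obtain x0 y0 :: 'a where "x0 \<noteq> y0" by blast
  then obtain r0 :: "'a rel" where r0: "r0 \<in> LO" using ex_LO by blast
  have setP: "set_pmf (t z r) = LO" if "r \<in> LO" for z and r :: "'a rel" using FS that unfolding full_support_def by blast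
  have fin: "finite (LO :: 'a rel set)" by (rule finite_LO)
  show ?thesis
  proof
    assume MI: "menu_invariant t"
    have three: "t x r0 = t y r0" if d: "x \<noteq> y" "x \<noteq> z" "y \<noteq> z" for x y z
    proof -
      obtain a where a: "0 < a" "a < 1" "\<forall>r. pmf (stat_dist t {x,y}) r = a * pmf (t x r0) r + (1 - a) * pmf (t y r0) r"
        using pair_stat[OF FS SI r0 d(1)] by blast
      obtain b where b: "0 < b" "b < 1" "\<forall>r. pmf (stat_dist t {x,z}) r = b * pmf (t x r0) r + (1 - b) * pmf (t z r0) r"
        using pair_stat[OF FS SI r0 d(2)] by blast
      obtain c where c: "0 < c" "c < 1" "\<forall>r. pmf (stat_dist t {y,z}) r = c * pmf (t y r0) r + (1 - c) * pmf (t z r0) r"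
        using pair_stat[OF FS SI r0 d(3)] by blast
      have X: "{x,y} \<in> X2" "{x,z} \<in> X2" "{y,z} \<in> X2" using d unfolding X2_def by auto
      have e1: "stat_dist t {x,z} = stat_dist t {x,y}" "stat_dist t {y,z} = stat_dist t {x,y}"
        using MI X unfolding menu_invariant_def by blast+
      show ?thesis
      proof (rule pmf_eqI)
        fix r
        show "pmf (t x r0) r = pmf (t y r0) r"
        proof -
          have "pmf (stat_dist t {x,y}) r = a * pmf (t x r0) r + (1 - a) * pmf (t y r0) r"
            "pmf (stat_dist t {x,y}) r = b * pmf (t x r0) r + (1 - b) * pmf (t z r0) r"
            "pmf (stat_dist t {x,y}) r = c * pmf (t y r0) r + (1 - c) * pmf (t z r0) r"
            using a(3)[rule_format, of r] b(3)[rule_format, of r] c(3)[rule_format, of r] e1 by simp_all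
          from alg[OF a(1,2) b(1,2) c(1,2) this] show ?thesis by simp
        qed
      qed
    qed
    show "\<forall>x y. \<forall>r\<in>LO. t x r = t y r"
    proof (intro allI ballI)
      fix x y :: 'a and r :: "'a rel" assume r: "r \<in> LO"
      show "t x r = t y r"
      proof (cases "x = y")
        case False
        obtain z where "z \<noteq> x" "z \<noteq> y" using other by blast
        then have "t x r0 = t y r0" using three[of x y z] False by auto
        moreover have "t x r = t x r0" "t y r = t y r0" using SI r r0 unfolding state_independent_def by blast+
        ultimately show ?thesis by simp
      qed simp
    qed
  next
    assume H: "\<forall>x y. \<forall>r\<in>LO. t x r = t y r"
    define p where "p = t x0 r0"
    have tp: "r \<in> LO \<Longrightarrow> t z r = p" for z and r :: "'a rel" proof -
      assume r: "r \<in> LO"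
      have "t z r = t x0 r" using H r by blast
      also have "\<dots> = t x0 r0" using SI r r0 unfolding state_independent_def by blast
      finally show ?thesis unfolding p_def .
    qed
    have setp: "set_pmf p = LO" using setP r0 unfolding p_def by blast
    have sum1: "(\<Sum>r\<in>LO. pmf p r) = 1" using sum_pmf_eq_1[OF fin] setp by simp
    have sd: "stat_dist t A = p" for A
      unfolding stat_dist_def
    proof (rule the_equality)
      show "stationary t A p" unfolding stationary_def markov_entry_def
        using setp tp sum1 by (simp add: sum_distrib_right[symmetric])
    next
      fix \<nu> assume st: "stationary t A \<nu>"
      have setn: "set_pmf \<nu> \<subseteq> LO" using st unfolding stationary_def by auto
      have s1: "(\<Sum>r\<in>LO. pmf \<nu> r) = 1" using sum_pmf_eq_1[OF fin setn] .
      show "\<nu> = p"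
      proof (rule pmf_eqI)
        fix r'
        show "pmf \<nu> r' = pmf p r'"
        proof (cases "r' \<in> LO")
          case True
          then have "pmf \<nu> r' = (\<Sum>r\<in>LO. pmf \<nu> r * pmf p r')"
            using st tp unfolding stationary_def markov_entry_def by simp
          also have "\<dots> = pmf p r'" using s1 by (simp add: sum_distrib_right[symmetric])
          finally show ?thesis .
        next
          case False
          have "r' \<notin> set_pmf \<nu>" "r' \<notin> set_pmf p" using False setn setp by auto
          then show ?thesis by (simp add: set_pmf_iff)
        qed
      qed
    qed
    show "menu_invariant t" unfolding menu_invariant_def sd by simp
  qed
qed

end
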